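(* For every $O\in\mathcal P_n$: 1. $\log U(O)=\sum_{\gamma\in\Gamma}\log U_\gamma(O)$. 2. For every $\gamma\in\Gamma$, $\log U_\gamma(O)=0$ if $\mathrm{supp}(O)\not\subseteq\gamma$; and $\log U(O)=0$ if $\mathrm{supp}(O)\not\subseteq\gamma$ for all $\gamma\in\Gamma$.
   Context: $\mathcal P_n=\{I,X,Y,Z\}^{\otimes n}$ (no phases); $[[A,B]]=1$ if $A,B$ commute and $-1$ otherwise. $\Gamma$ is a finite collection of subsets $\gamma\subseteq\{1,\dots,n\}$; each $\gamma$ carries a Pauli channel with error distribution $P_\gamma$ on $\mathcal P_n$ with $P_\gamma(e)=0$ unless $\mathrm{supp}(e)\subseteq\gamma$, and $P_\gamma(I)>1/2$, $P_\gamma(e)>0$ for all non-identity $e$ supported in $\gamma$. Local Pauli eigenvalues: $\Lambda_\gamma(O)=\sum_eP_\gamma(e)[[e,O]]$ (these are positive and depend only on $O_\gamma$, the restriction of $O$ to $\gamma$ with identity elsewhere). The total channel has eigenvalues $\Lambda(O)=\prod_{\gamma}\Lambda_\gamma(O_\gamma)$. Transformed eigenvalues: $\log U(O)=-\frac{2}{4^n}\sum_{O'\in\mathcal P_n}[[O',O]]\log\Lambda(O')$ and $\log U_\gamma(O)=-\frac{2}{4^n}\sum_{O'\in\mathcal P_n}[[O',O]]\log\Lambda_\gamma(O'_\gamma)$. *)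

theory Defs
  imports Complex_Main
begin

datatype pauli = PI | PX | PY | PZ

definition paulis :: "nat \<Rightarrow> (nat \<Rightarrow> pauli) set" where
  "paulis n = {p. \<forall>i. i \<notin> {1..n} \<longrightarrow> p i = PI}"

definition supp :: "(nat \<Rightarrow> pauli) \<Rightarrow> nat set" where
  "supp p = {i. p i \<noteq> PI}"

definition anticomm1 :: "pauli \<Rightarrow> pauli \<Rightarrow> bool" where
  "anticomm1 a b \<longleftrightarrow> a \<noteq> PI \<and> b \<noteq> PI \<and> a \<noteq> b"

text \<open>[[A,B]] = 1 if A,B commute, -1 otherwise.\<close>
definition comm :: "nat \<Rightarrow> (nat \<Rightarrow> pauli) \<Rightarrow> (nat \<Rightarrow> pauli) \<Rightarrow> real" where
  "comm n A B = (-1) ^ card {i \<in> {1..n}. anticomm1 (A i) (B i)}"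

definition restr :: "nat set \<Rightarrow> (nat \<Rightarrow> pauli) \<Rightarrow> (nat \<Rightarrow> pauli)" where
  "restr g Q = (\<lambda>i. if i \<in> g then Q i else PI)"

definition LamG :: "nat \<Rightarrow> (nat set \<Rightarrow> (nat \<Rightarrow> pauli) \<Rightarrow> real) \<Rightarrow> nat set \<Rightarrow> (nat \<Rightarrow> pauli) \<Rightarrow> real" where
  "LamG n P g Q = (\<Sum>e\<in>paulis n. P g e * comm n e Q)"

definition Lam :: "nat \<Rightarrow> nat set set \<Rightarrow> (nat set \<Rightarrow> (nat \<Rightarrow> pauli) \<Rightarrow> real) \<Rightarrow> (nat \<Rightarrow> pauli) \<Rightarrow> real" where
  "Lam n Gam P Q = (\<Prod>g\<in>Gam. LamG n P g (restr g Q))"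

definition logU :: "nat \<Rightarrow> nat set set \<Rightarrow> (nat set \<Rightarrow> (nat \<Rightarrow> pauli) \<Rightarrow> real) \<Rightarrow> (nat \<Rightarrow> pauli) \<Rightarrow> real" where
  "logU n Gam P Q = - 2 / 4 ^ n * (\<Sum>Q'\<in>paulis n. comm n Q' Q * ln (Lam n Gam P Q'))"

definition logUG :: "nat \<Rightarrow> (nat set \<Rightarrow> (nat \<Rightarrow> pauli) \<Rightarrow> real) \<Rightarrow> nat set \<Rightarrow> (nat \<Rightarrow> pauli) \<Rightarrow> real" where
  "logUG n P g Q = - 2 / 4 ^ n * (\<Sum>Q'\<in>paulis n. comm n Q' Q * ln (LamG n P g (restr g Q')))"

end

theory Submission
  imports Defs
begin

fun sw :: "pauli \<Rightarrow> pauli \<Rightarrow> pauli" where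
  "sw PI x = x"
| "sw PX PI = PY" | "sw PX PY = PI" | "sw PX PX = PZ" | "sw PX PZ = PX"
| "sw PY PI = PX" | "sw PY PX = PI" | "sw PY PY = PZ" | "sw PY PZ = PY"
| "sw PZ PI = PX" | "sw PZ PX = PI" | "sw PZ PZ = PY" | "sw PZ PY = PZ"

lemma sw_sw: "sw a (sw a x) = x"
  by (cases a; cases x; simp)

lemma sw_anti: "a \<noteq> PI \<Longrightarrow> anticomm1 (sw a x) a \<longleftrightarrow> \<not> anticomm1 x a"
  by (cases a; cases x; simp add: anticomm1_def)

lemma pauli_UNIV: "(UNIV :: pauli set) = {PI, PX, PY, PZ}"
  using pauli.exhaust by auto

lemma finite_paulis: "finite (paulis n)"
proof -
  have eq: "paulis n = {f. \<forall>x. (x \<in> {1..n} \<longrightarrow> f x \<in> UNIV) \<and> (x \<notin> {1..n} \<longrightarrow> f x = PI)}"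
    by (auto simp: paulis_def)
  then show ?thesis
  proof -
    have "finite (UNIV :: pauli set)" unfolding pauli_UNIV by simp
    then show ?thesis using finite_set_of_finite_funs[of "{1..n}" "UNIV :: pauli set" PI] eq by simp
  qed
qed

lemma comm_prod: "comm n A B = (\<Prod>j\<in>{1..n}. if anticomm1 (A j) (B j) then -1 else 1)"
proof -
  have "{i \<in> {1..n}. anticomm1 (A i) (B i)} = {1..n} \<inter> {j. anticomm1 (A j) (B j)}" by auto
  then show ?thesis unfolding comm_def by (simp add: prod.If_cases)
qed

lemma pm1: "(-1::real)^k = 1 \<or> (-1::real)^k = -1"
  by (induct k) auto

lemma comm_pm: "comm n A B = 1 \<or> comm n A B = -1"
  unfolding comm_def by (rule pm1)

lemma comm_id: "comm n (\<lambda>i. PI) B = 1"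
  unfolding comm_def anticomm1_def by simp

lemma comm_flip:
  assumes i: "i \<in> {1..n}" and a: "Q i \<noteq> PI"
  shows "comm n (A(i := sw (Q i) (A i))) Q = - comm n A Q"
proof -
  let ?h = "\<lambda>A j. if anticomm1 (A j) (Q j) then -1 else (1::real)"
  have "comm n (A(i := sw (Q i) (A i))) Q = ?h (A(i := sw (Q i) (A i))) i * (\<Prod>j\<in>{1..n}-{i}. ?h (A(i := sw (Q i) (A i))) j)"
    unfolding comm_prod using i by (simp add: prod.remove)
  also have "(\<Prod>j\<in>{1..n}-{i}. ?h (A(i := sw (Q i) (A i))) j) = (\<Prod>j\<in>{1..n}-{i}. ?h A j)"
    by (rule prod.cong) auto
  also have "?h (A(i := sw (Q i) (A i))) i = - ?h A i"
    using sw_anti[OF a, of "A i"] by simp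
  also have "- ?h A i * (\<Prod>j\<in>{1..n}-{i}. ?h A j) = - comm n A Q"
    unfolding comm_prod using i by (simp add: prod.remove)
  finally show ?thesis .
qed

lemma vanish:
  assumes Q: "Q \<in> paulis n" and ns: "\<not> supp Q \<subseteq> g"
  shows "(\<Sum>Q'\<in>paulis n. comm n Q' Q * f (restr g Q')) = 0"
proof -
  obtain i where i1: "Q i \<noteq> PI" and i2: "i \<notin> g" using ns by (auto simp: supp_def)
  have i: "i \<in> {1..n}" using Q i1 by (auto simp: paulis_def)
  define s where "s = (\<lambda>A::nat\<Rightarrow>pauli. A(i := sw (Q i) (A i)))"
  have ss: "s (s A) = A" for A by (simp add: s_def sw_sw)
  have sp: "A \<in> paulis n \<Longrightarrow> s A \<in> paulis n" for A
    using i by (auto simp: paulis_def s_def)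
  have bij: "bij_betw s (paulis n) (paulis n)"
    by (rule bij_betw_byWitness[where f'=s]) (auto simp: ss sp)
  have rs: "restr g (s A) = restr g A" for A
    using i2 by (auto simp: restr_def s_def)
  let ?S = "\<Sum>Q'\<in>paulis n. comm n Q' Q * f (restr g Q')"
  have "?S = (\<Sum>Q'\<in>paulis n. comm n (s Q') Q * f (restr g (s Q')))"
    using sum.reindex_bij_betw[OF bij, of "\<lambda>Q'. comm n Q' Q * f (restr g Q')"] by simp
  also have "\<dots> = - ?S"
    unfolding rs by (simp add: s_def comm_flip[of i n Q, OF i i1] sum_negf)
  finally show ?thesis by simp
qed

lemma LamG_pos:
  assumes nonneg: "\<forall>e\<in>paulis n. P g e \<ge> 0"
    and distr: "(\<Sum>e\<in>paulis n. P g e) = 1"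
    and idbig: "P g (\<lambda>i. PI) > 1/2"
  shows "LamG n P g R > 0"
proof -
  have I: "(\<lambda>i. PI) \<in> paulis n" by (simp add: paulis_def)
  let ?R = "paulis n - {\<lambda>i. PI}"
  have "LamG n P g R = P g (\<lambda>i. PI) + (\<Sum>e\<in>?R. P g e * comm n e R)"
    unfolding LamG_def using I finite_paulis by (simp add: sum.remove comm_id)
  moreover have "(\<Sum>e\<in>?R. P g e * comm n e R) \<ge> (\<Sum>e\<in>?R. - P g e)"
  proof (rule sum_mono)
    fix e assume "e \<in> ?R"
    then have "P g e \<ge> 0" using nonneg by auto
    then show "- P g e \<le> P g e * comm n e R" using comm_pm[of n e R] by auto
  qed
  moreover have "(\<Sum>e\<in>?R. P g e) = 1 - P g (\<lambda>i. PI)"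
    using distr I finite_paulis by (simp add: sum.remove)
  ultimately show ?thesis using idbig by (simp add: sum_negf)
qed

theorem lemma1:
  fixes n :: nat and Gam :: "nat set set"
    and P :: "nat set \<Rightarrow> (nat \<Rightarrow> pauli) \<Rightarrow> real"
  assumes finGam: "finite Gam"
    and subs: "\<forall>g\<in>Gam. g \<subseteq> {1..n}"
    and nonneg: "\<forall>g\<in>Gam. \<forall>e\<in>paulis n. P g e \<ge> 0"
    and distr: "\<forall>g\<in>Gam. (\<Sum>e\<in>paulis n. P g e) = 1"
    and local: "\<forall>g\<in>Gam. \<forall>e\<in>paulis n. \<not> supp e \<subseteq> g \<longrightarrow> P g e = 0"
    and idbig: "\<forall>g\<in>Gam. P g (\<lambda>i. PI) > 1/2"
    and pos: "\<forall>g\<in>Gam. \<forall>e\<in>paulis n. supp e \<subseteq> g \<and> e \<noteq> (\<lambda>i. PI) \<longrightarrow> P g e > 0"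
  shows "\<forall>Q\<in>paulis n.
           logU n Gam P Q = (\<Sum>g\<in>Gam. logUG n P g Q)
         \<and> (\<forall>g\<in>Gam. \<not> supp Q \<subseteq> g \<longrightarrow> logUG n P g Q = 0)
         \<and> ((\<forall>g\<in>Gam. \<not> supp Q \<subseteq> g) \<longrightarrow> logU n Gam P Q = 0)"
proof
  fix Q assume Q: "Q \<in> paulis n"
  have pos': "g \<in> Gam \<Longrightarrow> LamG n P g R > 0" for g R
  proof -
    assume g: "g \<in> Gam"
    show ?thesis by (rule LamG_pos) (use g nonneg distr idbig in auto)
  qed
  have lnL: "ln (Lam n Gam P Q') = (\<Sum>g\<in>Gam. ln (LamG n P g (restr g Q')))" for Q'
  proof -
    have "\<And>g. g \<in> Gam \<Longrightarrow> LamG n P g (restr g Q') \<noteq> 0" using pos' by (metis less_irrefl)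
    then show ?thesis unfolding Lam_def by (rule ln_prod[OF finGam])
  qed
  have A: "logU n Gam P Q = (\<Sum>g\<in>Gam. logUG n P g Q)"
  proof -
    have "logU n Gam P Q = - 2 / 4 ^ n * (\<Sum>Q'\<in>paulis n. \<Sum>g\<in>Gam. comm n Q' Q * ln (LamG n P g (restr g Q')))"
      unfolding logU_def lnL by (simp add: sum_distrib_left)
    also have "\<dots> = - 2 / 4 ^ n * (\<Sum>g\<in>Gam. \<Sum>Q'\<in>paulis n. comm n Q' Q * ln (LamG n P g (restr g Q')))"
      by (rule arg_cong[where f="\<lambda>x. - 2 / 4 ^ n * x"], rule sum.swap)
    also have "\<dots> = (\<Sum>g\<in>Gam. logUG n P g Q)"
      unfolding logUG_def by (simp add: sum_distrib_left)
    finally show ?thesis .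
  qed
  have B: "\<forall>g\<in>Gam. \<not> supp Q \<subseteq> g \<longrightarrow> logUG n P g Q = 0"
    unfolding logUG_def using vanish[OF Q, where f="\<lambda>R. ln (LamG n P _ R)"] by simp
  have C: "(\<forall>g\<in>Gam. \<not> supp Q \<subseteq> g) \<longrightarrow> logU n Gam P Q = 0"
    using A B by (simp add: sum.neutral)
  show "logU n Gam P Q = (\<Sum>g\<in>Gam. logUG n P g Q)
         \<and> (\<forall>g\<in>Gam. \<not> supp Q \<subseteq> g \<longrightarrow> logUG n P g Q = 0)
         \<and> ((\<forall>g\<in>Gam. \<not> supp Q \<subseteq> g) \<longrightarrow> logU n Gam P Q = 0)"
    using A B C by blast
qed

end
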